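(* Let $\mathbf L=(L,\le,\wedge,\vee,0,1,\nu)$ be a bounded lattice with an antitone map $\nu$, and let $\mathbb V$ be one of the varieties $\mathbb M,\mathbb G,\mathbb{INV},\mathbb{DMA},\mathbb O,\mathbb{BA}$. If $\mathbf L\in\mathbb V$, then the full complex algebra $(\mathcal G(X),\subseteq,\bigcap,\bigvee,\emptyset,X,(\cdot)^* )$ of its canonical frame (which is a canonical extension of $\mathbf L$ with $(\cdot)^*$ the $\pi$-extension of $\nu$) also belongs to $\mathbb V$. Thus each of these varieties is closed under canonical extensions.
   Context: Varieties: $\mathbb M$: bounded lattices with antitone $\nu$, $\nu0=1$, $\nu(a\vee b)=\nu a\wedge\nu b$; $\mathbb G$: $\mathbb M$ plus $a\le\nu\nu a$; $\mathbb{INV}$: $\nu$ an antitone involution ($\nu\nu a=a$); $\mathbb{DMA}$: $\mathbb{INV}$ plus distributivity (De Morgan algebras); $\mathbb O$: $\mathbb{INV}$ plus $a\wedge\nu a=0$ (ortholattices); $\mathbb{BA}$: Boolean algebras with $\nu$ the complement. Canonical frame of $\mathbf L$: $X$ the proper filters, $Y$ the proper ideals, $x\parallel y$ iff $x\cap y\neq\emptyset$; $\widehat\nu(x)$ is the ideal generated by $\{\nu a:a\in x\}$; $yS_\vee x$ iff $\widehat\nu(x)\subseteq y$. For $U\subseteq X$, $U'=\{y:\forall x\in U\;x\parallel y\}$; for $V\subseteq Y$, $V'=\{x:\forall y\in V\;x\parallel y\}$; $\mathcal G(X)=\{A\subseteq X:A=A''\}$ with meets = intersections, joins $(\bigcup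 A_j)''$. $x\perp z$ iff $\forall y(yS_\vee z\Rightarrow x\parallel y)$; $A^*=\{x:\forall z\in A\;x\perp z\}$. *)

theory Defs
  imports Main
begin

definition bounded_lattice_on ::
  "'c set \<Rightarrow> ('c \<Rightarrow> 'c \<Rightarrow> bool) \<Rightarrow> ('c \<Rightarrow> 'c \<Rightarrow> 'c) \<Rightarrow> ('c \<Rightarrow> 'c \<Rightarrow> 'c) \<Rightarrow> 'c \<Rightarrow> 'c \<Rightarrow> bool" where
  "bounded_lattice_on C le mt jn bt tp \<longleftrightarrow>
     (\<forall>a\<in>C. le a a) \<and>
     (\<forall>a\<in>C. \<forall>b\<in>C. le a b \<and> le b a \<longrightarrow> a = b) \<and>
     (\<forall>a\<in>C. \<forall>b\<in>C. \<forall>c\<in>C. le a b \<and> le b c \<longrightarrow> le a c) \<and>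
     (\<forall>a\<in>C. \<forall>b\<in>C. mt a b \<in> C \<and> le (mt a b) a \<and> le (mt a b) b \<and>
                      (\<forall>c\<in>C. le c a \<and> le c b \<longrightarrow> le c (mt a b))) \<and>
     (\<forall>a\<in>C. \<forall>b\<in>C. jn a b \<in> C \<and> le a (jn a b) \<and> le b (jn a b) \<and>
                      (\<forall>c\<in>C. le a c \<and> le b c \<longrightarrow> le (jn a b) c)) \<and>
     bt \<in> C \<and> tp \<in> C \<and> (\<forall>a\<in>C. le bt a \<and> le a tp)"

definition distributive_on ::
  "'c set \<Rightarrow> ('c \<Rightarrow> 'c \<Rightarrow> 'c) \<Rightarrow> ('c \<Rightarrow> 'c \<Rightarrow> 'c) \<Rightarrow> bool" where
  "distributive_on C mt jn \<longleftrightarrow>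
     (\<forall>a\<in>C. \<forall>b\<in>C. \<forall>c\<in>C. mt a (jn b c) = jn (mt a b) (mt a c))"

definition M_alg ::
  "'c set \<Rightarrow> ('c \<Rightarrow> 'c \<Rightarrow> bool) \<Rightarrow> ('c \<Rightarrow> 'c \<Rightarrow> 'c) \<Rightarrow> ('c \<Rightarrow> 'c \<Rightarrow> 'c) \<Rightarrow> 'c \<Rightarrow> 'c \<Rightarrow> ('c \<Rightarrow> 'c) \<Rightarrow> bool" where
  "M_alg C le mt jn bt tp nu \<longleftrightarrow>
     bounded_lattice_on C le mt jn bt tp \<and>
     (\<forall>a\<in>C. nu a \<in> C) \<and>
     (\<forall>a\<in>C. \<forall>b\<in>C. le a b \<longrightarrow> le (nu b) (nu a)) \<and>
     nu bt = tp \<and>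
     (\<forall>a\<in>C. \<forall>b\<in>C. nu (jn a b) = mt (nu a) (nu b))"

datatype variety = VM | VG | VINV | VDMA | VO | VBA

definition in_variety ::
  "variety \<Rightarrow> 'c set \<Rightarrow> ('c \<Rightarrow> 'c \<Rightarrow> bool) \<Rightarrow> ('c \<Rightarrow> 'c \<Rightarrow> 'c) \<Rightarrow> ('c \<Rightarrow> 'c \<Rightarrow> 'c) \<Rightarrow> 'c \<Rightarrow> 'c \<Rightarrow> ('c \<Rightarrow> 'c) \<Rightarrow> bool" where
  "in_variety V C le mt jn bt tp nu \<longleftrightarrow> M_alg C le mt jn bt tp nu \<and>
     (case V of
        VM \<Rightarrow> True
      | VG \<Rightarrow> (\<forall>a\<in>C. le a (nu (nu a)))
      | VINV \<Rightarrow> (\<forall>a\<in>C. nu (nu a) = a)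
      | VDMA \<Rightarrow> (\<forall>a\<in>C. nu (nu a) = a) \<and> distributive_on C mt jn
      | VO \<Rightarrow> (\<forall>a\<in>C. nu (nu a) = a) \<and> (\<forall>a\<in>C. mt a (nu a) = bt)
      | VBA \<Rightarrow> distributive_on C mt jn \<and>
               (\<forall>a\<in>C. mt a (nu a) = bt \<and> jn a (nu a) = tp))"

definition is_filter :: "'a::bounded_lattice set \<Rightarrow> bool" where
  "is_filter F \<longleftrightarrow> F \<noteq> {} \<and> (\<forall>a\<in>F. \<forall>b. a \<le> b \<longrightarrow> b \<in> F) \<and> (\<forall>a\<in>F. \<forall>b\<in>F. inf a b \<in> F)"

definition is_ideal :: "'a::bounded_lattice set \<Rightarrow> bool" where
  "is_ideal I \<longleftrightarrow> I \<noteq> {} \<and> (\<forall>a\<in>I. \<forall>b. b \<le> a \<longrightarrow> b \<in> I) \<and> (\<forall>a\<in>I. \<forall>b\<in>I. sup a b \<in> I)"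

definition proper_filters :: "'a::bounded_lattice set set" where
  "proper_filters = {F. is_filter F \<and> F \<noteq> UNIV}"

definition proper_ideals :: "'a::bounded_lattice set set" where
  "proper_ideals = {I. is_ideal I \<and> I \<noteq> UNIV}"

definition ideal_gen :: "'a::bounded_lattice set \<Rightarrow> 'a set" where
  "ideal_gen S = \<Inter>{I. is_ideal I \<and> S \<subseteq> I}"

definition meets :: "'a set \<Rightarrow> 'a set \<Rightarrow> bool" where
  "meets x y \<longleftrightarrow> x \<inter> y \<noteq> {}"

definition nu_hat :: "('a::bounded_lattice \<Rightarrow> 'a) \<Rightarrow> 'a set \<Rightarrow> 'a set" where
  "nu_hat nu x = ideal_gen (nu ` x)"

definition S_vee :: "('a::bounded_lattice \<Rightarrow> 'a) \<Rightarrow> 'a set \<Rightarrow> 'a set \<Rightarrow> bool" where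
  "S_vee nu y x \<longleftrightarrow> nu_hat nu x \<subseteq> y"

text \<open>U' for U a set of filters (a set of ideals), and V' for V a set of ideals (a set of filters).\<close>
definition polarX :: "'a::bounded_lattice set set \<Rightarrow> 'a set set" where
  "polarX U = {y \<in> proper_ideals. \<forall>x\<in>U. meets x y}"

definition polarY :: "'a::bounded_lattice set set \<Rightarrow> 'a set set" where
  "polarY V = {x \<in> proper_filters. \<forall>y\<in>V. meets x y}"

definition Galois_sets :: "'a::bounded_lattice set set set" where
  "Galois_sets = {A. A \<subseteq> proper_filters \<and> polarY (polarX A) = A}"

definition G_join :: "'a::bounded_lattice set set \<Rightarrow> 'a set set \<Rightarrow> 'a set set" where
  "G_join A B = polarY (polarX (A \<union> B))"

definition perp :: "('a::bounded_lattice \<Rightarrow> 'a) \<Rightarrow> 'a set \<Rightarrow> 'a set \<Rightarrow> bool" where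
  "perp nu x z \<longleftrightarrow> (\<forall>y\<in>proper_ideals. S_vee nu y z \<longrightarrow> meets x y)"

definition star :: "('a::bounded_lattice \<Rightarrow> 'a) \<Rightarrow> 'a set set \<Rightarrow> 'a set set" where
  "star nu A = {x \<in> proper_filters. \<forall>z\<in>A. perp nu x z}"

end

theory Submission
  imports Defs
begin


lemma filter_top: "is_filter F \<Longrightarrow> top \<in> F"
  unfolding is_filter_def by auto

lemma filter_bot: "is_filter F \<Longrightarrow> bot \<in> F \<Longrightarrow> F = UNIV"
  unfolding is_filter_def by auto

lemma filter_up: "is_filter F \<Longrightarrow> a \<in> F \<Longrightarrow> a \<le> b \<Longrightarrow> b \<in> F"
  unfolding is_filter_def by auto

lemma filter_inf: "is_filter F \<Longrightarrow> a \<in> F \<Longrightarrow> b \<in> F \<Longrightarrow> inf a b \<in> F"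
  unfolding is_filter_def by auto

lemma ideal_down: "is_ideal F \<Longrightarrow> a \<in> F \<Longrightarrow> b \<le> a \<Longrightarrow> b \<in> F"
  unfolding is_ideal_def by auto

lemma ideal_sup: "is_ideal F \<Longrightarrow> a \<in> F \<Longrightarrow> b \<in> F \<Longrightarrow> sup a b \<in> F"
  unfolding is_ideal_def by auto

lemma ideal_top: "is_ideal F \<Longrightarrow> top \<in> F \<Longrightarrow> F = UNIV"
  unfolding is_ideal_def by auto

lemma ideal_bot: "is_ideal F \<Longrightarrow> bot \<in> F"
  unfolding is_ideal_def by auto

lemma pf_bot: "x \<in> proper_filters \<Longrightarrow> bot \<notin> x"
  unfolding proper_filters_def using filter_bot by auto

lemma polarY_sub: "polarY V \<subseteq> proper_filters"
  unfolding polarY_def by auto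

lemma polarX_sub: "polarX V \<subseteq> proper_ideals"
  unfolding polarX_def by auto

lemma polarX_anti: "U \<subseteq> U' \<Longrightarrow> polarX U' \<subseteq> polarX U"
  unfolding polarX_def by auto

lemma polarY_anti: "U \<subseteq> U' \<Longrightarrow> polarY U' \<subseteq> polarY U"
  unfolding polarY_def by auto

lemma extY: "U \<subseteq> proper_filters \<Longrightarrow> U \<subseteq> polarY (polarX U)"
  unfolding polarY_def polarX_def meets_def by auto

lemma extX: "V \<subseteq> proper_ideals \<Longrightarrow> V \<subseteq> polarX (polarY V)"
  unfolding polarY_def polarX_def meets_def by auto

lemma polarY_Galois: "V \<subseteq> proper_ideals \<Longrightarrow> polarY V \<in> Galois_sets"
proof -
  assume V: "V \<subseteq> proper_ideals"
  have "polarY (polarX (polarY V)) \<subseteq> polarY V" using polarY_anti[OF extX[OF V]] .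
  moreover have "polarY V \<subseteq> polarY (polarX (polarY V))" using extY[OF polarY_sub] .
  ultimately show ?thesis unfolding Galois_sets_def using polarY_sub by auto
qed

lemma cl_Galois: "polarY (polarX U) \<in> Galois_sets"
  using polarY_Galois[OF polarX_sub] .

lemma Galois_sub: "A \<in> Galois_sets \<Longrightarrow> A \<subseteq> proper_filters"
  unfolding Galois_sets_def by auto

lemma Galois_cl: "A \<in> Galois_sets \<Longrightarrow> polarY (polarX A) = A"
  unfolding Galois_sets_def by auto

lemma cl_least: "U \<subseteq> A \<Longrightarrow> A \<in> Galois_sets \<Longrightarrow> polarY (polarX U) \<subseteq> A"
  using polarY_anti[OF polarX_anti] Galois_cl by metis

lemma Galois_up: "A \<in> Galois_sets \<Longrightarrow> x \<in> A \<Longrightarrow> x \<subseteq> p \<Longrightarrow> p \<in> proper_filters \<Longrightarrow> p \<in> A"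
proof -
  assume A: "A \<in> Galois_sets" and x: "x \<in> A" "x \<subseteq> p" and p: "p \<in> proper_filters"
  have "p \<in> polarY (polarX A)"
    unfolding polarY_def using p x unfolding polarX_def meets_def by blast
  thus ?thesis using Galois_cl[OF A] by simp
qed

lemma Galois_empty: "({} :: 'a::bounded_lattice set set) \<in> Galois_sets"
proof -
  have "polarY (polarX ({} :: 'a set set)) = {}"
  proof (rule ccontr)
    assume "polarY (polarX ({} :: 'a set set)) \<noteq> {}"
    then obtain x :: "'a set" where x: "x \<in> proper_filters" "\<forall>y\<in>proper_ideals. meets x y"
      unfolding polarY_def polarX_def by auto
    have bi: "is_ideal ({bot} :: 'a set)" unfolding is_ideal_def by (auto simp: bot_unique)
    have "bot \<notin> x" using pf_bot[OF x(1)] .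
    moreover have "({bot}::'a set) \<noteq> UNIV"
    proof
      assume "({bot}::'a set) = UNIV"
      moreover have "top \<in> x" using x(1) filter_top unfolding proper_filters_def by auto
      ultimately show False using \<open>bot \<notin> x\<close> by (metis UNIV_I singletonD)
    qed
    ultimately show False using x(2) bi unfolding proper_ideals_def meets_def by auto
  qed
  thus ?thesis unfolding Galois_sets_def by auto
qed

lemma Galois_top: "(proper_filters :: 'a::bounded_lattice set set) \<in> Galois_sets"
  unfolding Galois_sets_def using polarY_sub extY[of proper_filters] by auto

lemma Galois_inter: "A \<in> Galois_sets \<Longrightarrow> B \<in> Galois_sets \<Longrightarrow> A \<inter> B \<in> Galois_sets"
proof -
  assume A: "A \<in> Galois_sets" and B: "B \<in> Galois_sets"
  have "polarY (polarX (A \<inter> B)) \<subseteq> A" using cl_least[OF _ A] by blast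
  moreover have "polarY (polarX (A \<inter> B)) \<subseteq> B" using cl_least[OF _ B] by blast
  moreover have "A \<inter> B \<subseteq> polarY (polarX (A \<inter> B))"
    using extY[of "A \<inter> B"] Galois_sub[OF A] by (meson inf.coboundedI1)
  ultimately have "polarY (polarX (A \<inter> B)) = A \<inter> B" by (meson le_inf_iff subset_antisym)
  moreover have "A \<inter> B \<subseteq> proper_filters" using Galois_sub[OF A] by (meson inf.coboundedI1)
  ultimately show ?thesis unfolding Galois_sets_def by simp
qed

lemma G_join_Galois: "G_join A B \<in> Galois_sets"
  unfolding G_join_def by (rule cl_Galois)

lemma G_join_ub1: "A \<in> Galois_sets \<Longrightarrow> B \<in> Galois_sets \<Longrightarrow> A \<subseteq> G_join A B"
proof -
  assume A: "A \<in> Galois_sets" and B: "B \<in> Galois_sets"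
  have "A \<union> B \<subseteq> proper_filters" using Galois_sub[OF A] Galois_sub[OF B] by simp
  then have "A \<union> B \<subseteq> G_join A B" unfolding G_join_def by (rule extY)
  then show ?thesis by (rule subset_trans[rotated]) simp
qed

lemma G_join_ub2: "A \<in> Galois_sets \<Longrightarrow> B \<in> Galois_sets \<Longrightarrow> B \<subseteq> G_join A B"
proof -
  assume A: "A \<in> Galois_sets" and B: "B \<in> Galois_sets"
  have "A \<union> B \<subseteq> proper_filters" using Galois_sub[OF A] Galois_sub[OF B] by simp
  then have "A \<union> B \<subseteq> G_join A B" unfolding G_join_def by (rule extY)
  then show ?thesis by (rule subset_trans[rotated]) simp
qed

lemma G_join_least: "A \<subseteq> C \<Longrightarrow> B \<subseteq> C \<Longrightarrow> C \<in> Galois_sets \<Longrightarrow> G_join A B \<subseteq> C"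
  unfolding G_join_def by (rule cl_least) (rule Un_least)

lemma BL: "bounded_lattice_on (Galois_sets :: 'a::bounded_lattice set set set) (\<subseteq>) (\<inter>) G_join {} proper_filters"
  unfolding bounded_lattice_on_def
proof (intro conjI ballI impI)
  fix a b assume a: "a \<in> (Galois_sets :: 'a set set set)" and b: "b \<in> (Galois_sets :: 'a set set set)"
  show "a \<inter> b \<in> Galois_sets" using Galois_inter[OF a b] .
  show "G_join a b \<in> Galois_sets" by (rule G_join_Galois)
  show "a \<subseteq> G_join a b" using G_join_ub1[OF a b] .
  show "b \<subseteq> G_join a b" using G_join_ub2[OF a b] .
  fix c assume "c \<in> (Galois_sets :: 'a set set set)" "a \<subseteq> c \<and> b \<subseteq> c"
  then show "G_join a b \<subseteq> c" using G_join_least by blast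
next
  fix a assume a: "a \<in> (Galois_sets :: 'a set set set)"
  show "{} \<subseteq> a" by simp
  show "a \<subseteq> proper_filters" using Galois_sub[OF a] .
qed (auto simp: Galois_empty Galois_top)



lemma ideal_gen_sub: "is_ideal y \<Longrightarrow> ideal_gen S \<subseteq> y \<longleftrightarrow> S \<subseteq> y"
  unfolding ideal_gen_def by auto

lemma S_vee_iff: "is_ideal y \<Longrightarrow> S_vee nu y z \<longleftrightarrow> nu ` z \<subseteq> y"
  unfolding S_vee_def nu_hat_def by (rule ideal_gen_sub)

lemma star_eq: "star nu A = polarY {y\<in>proper_ideals. \<exists>z\<in>A. S_vee nu y z}"
  unfolding star_def polarY_def perp_def by auto

lemma star_Galois: "star nu A \<in> Galois_sets"
  unfolding star_eq by (rule polarY_Galois) auto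

lemma perp_iff:
  assumes anti: "antimono nu" and x: "is_filter x" and z: "is_filter z"
  shows "perp nu x z \<longleftrightarrow> (\<exists>c\<in>z. nu c \<in> x)"
proof
  assume "\<exists>c\<in>z. nu c \<in> x"
  then show "perp nu x z" unfolding perp_def proper_ideals_def meets_def
    using S_vee_iff by blast
next
  assume p: "perp nu x z"
  define J where "J = {b. \<exists>c\<in>z. b \<le> nu c}"
  have J: "is_ideal J"
    unfolding is_ideal_def
  proof (intro conjI ballI allI impI)
    show "J \<noteq> {}" using z unfolding J_def is_filter_def by auto
  next
    fix a b assume "a \<in> J" "b \<le> a" then show "b \<in> J" unfolding J_def by (auto intro: order_trans)
  next
    fix a b assume "a \<in> J" "b \<in> J"
    then obtain c d where c: "c \<in> z" "a \<le> nu c" and d: "d \<in> z" "b \<le> nu d" unfolding J_def by auto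
    have "nu c \<le> nu (inf c d)" "nu d \<le> nu (inf c d)" using anti unfolding antimono_def by auto
    then have "sup a b \<le> nu (inf c d)" using c d by (meson le_sup_iff order_trans)
    then show "sup a b \<in> J" unfolding J_def using filter_inf[OF z c(1) d(1)] by auto
  qed
  show "\<exists>c\<in>z. nu c \<in> x"
  proof (cases "J = UNIV")
    case True
    then obtain c where "c \<in> z" "top \<le> nu c" unfolding J_def by auto
    then show ?thesis using filter_top[OF x] by (metis top_le)
  next
    case False
    have "S_vee nu J z" using S_vee_iff[OF J] unfolding J_def by auto
    then have "meets x J" using p False J unfolding perp_def proper_ideals_def by auto
    then obtain a c where "a \<in> x" "c \<in> z" "a \<le> nu c" unfolding meets_def J_def by auto
    then show ?thesis using filter_up[OF x] by blast
  qed
qed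

lemma pf_filter: "x \<in> proper_filters \<Longrightarrow> is_filter x"
  unfolding proper_filters_def by auto

lemma star_iff:
  assumes anti: "antimono nu" and A: "A \<subseteq> proper_filters"
  shows "x \<in> star nu A \<longleftrightarrow> x \<in> proper_filters \<and> (\<forall>z\<in>A. \<exists>c\<in>z. nu c \<in> x)"
proof -
  have "x \<in> proper_filters \<Longrightarrow> z \<in> A \<Longrightarrow> perp nu x z \<longleftrightarrow> (\<exists>c\<in>z. nu c \<in> x)" for z
    using perp_iff[OF anti pf_filter pf_filter] A by blast
  then show ?thesis unfolding star_def by auto
qed

lemma star_anti: "A \<subseteq> B \<Longrightarrow> star nu B \<subseteq> star nu A"
  unfolding star_def by auto

lemma star_empty: "star nu {} = proper_filters"
  unfolding star_def by auto

lemma star_cl: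
  assumes M: "M_alg UNIV (\<le>) inf sup bot top nu" and anti: "antimono nu"
    and C: "C \<subseteq> proper_filters"
  shows "star nu (polarY (polarX C)) = star nu C"
proof
  show "star nu (polarY (polarX C)) \<subseteq> star nu C" using star_anti[OF extY[OF C]] .
next
  show "star nu C \<subseteq> star nu (polarY (polarX C))"
  proof
    fix x assume xs: "x \<in> star nu C"
    then have x: "x \<in> proper_filters" and xc: "\<forall>w\<in>C. \<exists>c\<in>w. nu c \<in> x"
      using star_iff[OF anti C] by auto
    have xf: "is_filter x" using pf_filter[OF x] .
    have nb: "nu bot = top" and nj: "\<And>a b. nu (sup a b) = inf (nu a) (nu b)"
      using M unfolding M_alg_def by auto
    define J where "J = {a. nu a \<in> x}"
    have J: "is_ideal J" unfolding is_ideal_def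
    proof (intro conjI ballI allI impI)
      show "J \<noteq> {}" unfolding J_def using nb filter_top[OF xf] by (metis empty_iff mem_Collect_eq)
    next
      fix a b assume "a \<in> J" "b \<le> a" then show "b \<in> J" unfolding J_def
        using anti filter_up[OF xf] unfolding antimono_def by blast
    next
      fix a b assume "a \<in> J" "b \<in> J" then show "sup a b \<in> J" unfolding J_def
        using nj filter_inf[OF xf] by simp
    qed
    show "x \<in> star nu (polarY (polarX C))"
    proof (subst star_iff[OF anti polarY_sub], intro conjI ballI x)
      fix z assume z: "z \<in> polarY (polarX C)"
      then have zf: "is_filter z" using polarY_sub pf_filter by blast
      show "\<exists>c\<in>z. nu c \<in> x"
      proof (cases "J = UNIV")
        case True
        obtain c where "c \<in> z" using zf unfolding is_filter_def by auto
        then show ?thesis using True unfolding J_def by auto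
      next
        case False
        have "J \<in> polarX C" unfolding polarX_def proper_ideals_def meets_def J_def
          using J False xc unfolding J_def by auto
        then have "meets z J" using z unfolding polarY_def by auto
        then show ?thesis unfolding meets_def J_def by auto
      qed
    qed
  qed
qed

lemma star_join:
  assumes M: "M_alg UNIV (\<le>) inf sup bot top nu" and anti: "antimono nu"
    and A: "A \<subseteq> proper_filters" and B: "B \<subseteq> proper_filters"
  shows "star nu (G_join A B) = star nu A \<inter> star nu B"
  unfolding G_join_def using star_cl[OF M anti, of "A \<union> B"] A B unfolding star_def by auto



lemma gen_filter:
  assumes M: "is_filter M"
  shows "is_filter {d. \<exists>c\<in>M. inf c a \<le> d}" "M \<subseteq> {d. \<exists>c\<in>M. inf c a \<le> d}"
    "a \<in> {d. \<exists>c\<in>M. inf c a \<le> d}"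
proof -
  obtain c0 where c0: "c0 \<in> M" using M unfolding is_filter_def by auto
  show "is_filter {d. \<exists>c\<in>M. inf c a \<le> d}" unfolding is_filter_def
  proof (intro conjI ballI allI impI)
    show "{d. \<exists>c\<in>M. inf c a \<le> d} \<noteq> {}" using c0 by auto
  next
    fix u v assume "u \<in> {d. \<exists>c\<in>M. inf c a \<le> d}" "u \<le> v"
    then show "v \<in> {d. \<exists>c\<in>M. inf c a \<le> d}" by (auto intro: order_trans)
  next
    fix u v assume "u \<in> {d. \<exists>c\<in>M. inf c a \<le> d}" "v \<in> {d. \<exists>c\<in>M. inf c a \<le> d}"
    then obtain c1 c2 where "c1 \<in> M" "inf c1 a \<le> u" "c2 \<in> M" "inf c2 a \<le> v" by auto
    moreover have "inf (inf c1 c2) a \<le> inf (inf c1 a) (inf c2 a)" by (simp add: inf.coboundedI1 inf.coboundedI2 le_infI2)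
    ultimately show "inf u v \<in> {d. \<exists>c\<in>M. inf c a \<le> d}" using filter_inf[OF M]
      by (smt (verit, best) inf_mono mem_Collect_eq order_trans)
  qed
  show "M \<subseteq> {d. \<exists>c\<in>M. inf c a \<le> d}" using inf.cobounded1 by blast
  show "a \<in> {d. \<exists>c\<in>M. inf c a \<le> d}" using c0 by auto
qed

lemma pft:
  assumes D: "distributive_on (UNIV::'a::bounded_lattice set) inf sup" and x: "is_filter (x::'a set)" and y: "is_ideal y"
    and xy: "x \<inter> y = {}"
  shows "\<exists>p. is_filter p \<and> x \<subseteq> p \<and> p \<inter> y = {} \<and> (\<forall>a b. sup a b \<in> p \<longrightarrow> a \<in> p \<or> b \<in> p)"
proof -
  define S where "S = {p. is_filter p \<and> x \<subseteq> p \<and> p \<inter> y = {}}"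
  have "\<forall>C\<in>chains S. \<exists>U\<in>S. \<forall>X\<in>C. X \<subseteq> U"
  proof
    fix C assume C: "C \<in> chains S"
    show "\<exists>U\<in>S. \<forall>X\<in>C. X \<subseteq> U"
    proof (cases "C = {}")
      case True then show ?thesis using x xy unfolding S_def by auto
    next
      case False
      have CS: "C \<subseteq> S" using chainsD2[OF C] .
      have "is_filter (\<Union>C)" unfolding is_filter_def
      proof (intro conjI ballI allI impI)
        obtain c where c: "c \<in> C" using False by auto
        then have "c \<noteq> {}" using CS unfolding S_def is_filter_def by blast
        then show "\<Union>C \<noteq> {}" using c by blast
      next
        fix a b assume "a \<in> \<Union>C" "a \<le> b" then show "b \<in> \<Union>C"
          using CS unfolding S_def is_filter_def by blast
      next
        fix a b assume "a \<in> \<Union>C" "b \<in> \<Union>C"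
        then obtain c1 c2 where c: "c1 \<in> C" "a \<in> c1" "c2 \<in> C" "b \<in> c2" by auto
        then have "c1 \<subseteq> c2 \<or> c2 \<subseteq> c1" using chainsD[OF C] by blast
        then show "inf a b \<in> \<Union>C" using c CS unfolding S_def is_filter_def by blast
      qed
      moreover have "x \<subseteq> \<Union>C" using False CS unfolding S_def by blast
      moreover have "\<Union>C \<inter> y = {}" using CS unfolding S_def by blast
      ultimately show ?thesis unfolding S_def by blast
    qed
  qed
  from Zorn_Lemma2[OF this] obtain M where MS: "M \<in> S" and max: "\<forall>X\<in>S. M \<subseteq> X \<longrightarrow> X = M" by blast
  have Mf: "is_filter M" and xM: "x \<subseteq> M" and My: "M \<inter> y = {}" using MS unfolding S_def by auto
  have key: "\<exists>c\<in>M. \<exists>i\<in>y. inf c a \<le> i" if a: "a \<notin> M" for a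
  proof -
    let ?N = "{d. \<exists>c\<in>M. inf c a \<le> d}"
    have "?N \<notin> S"
    proof
      assume "?N \<in> S"
      then have "?N = M" using max gen_filter(2)[OF Mf, of a] by blast
      then show False using gen_filter(3)[OF Mf, of a] a by blast
    qed
    then have "?N \<inter> y \<noteq> {}" using gen_filter[OF Mf, of a] xM unfolding S_def by blast
    then show ?thesis by auto
  qed
  have "\<forall>a b. sup a b \<in> M \<longrightarrow> a \<in> M \<or> b \<in> M"
  proof (intro allI impI, rule ccontr)
    fix a b assume ab: "sup a b \<in> M" "\<not> (a \<in> M \<or> b \<in> M)"
    obtain c1 i1 where 1: "c1 \<in> M" "i1 \<in> y" "inf c1 a \<le> i1" using key ab by blast
    obtain c2 i2 where 2: "c2 \<in> M" "i2 \<in> y" "inf c2 b \<le> i2" using key ab by blast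
    let ?d = "inf c1 c2"
    have e: "inf ?d (sup a b) \<in> M" using filter_inf[OF Mf filter_inf[OF Mf 1(1) 2(1)] ab(1)] .
    have "inf ?d (sup a b) = sup (inf ?d a) (inf ?d b)" using D unfolding distributive_on_def by (meson UNIV_I)
    also have "\<dots> \<le> sup i1 i2"
    proof (rule sup_mono)
      show "inf ?d a \<le> i1" using 1(3) by (meson inf.cobounded1 inf_mono order_refl order_trans)
      show "inf ?d b \<le> i2" using 2(3) by (meson inf.cobounded2 inf_mono order_refl order_trans)
    qed
    finally have "inf ?d (sup a b) \<in> y" using ideal_down[OF y ideal_sup[OF y 1(2) 2(2)]] by blast
    then show False using e My by blast
  qed
  then show ?thesis using Mf xM My by blast
qed

lemma pft':
  assumes D: "distributive_on (UNIV::'a::bounded_lattice set) inf sup" and x: "is_filter (x::'a set)" and y: "y \<in> proper_ideals"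
    and xy: "x \<inter> y = {}"
  shows "\<exists>p. p \<in> proper_filters \<and> x \<subseteq> p \<and> p \<inter> y = {} \<and> (\<forall>a b. sup a b \<in> p \<longrightarrow> a \<in> p \<or> b \<in> p)
     \<and> - p \<in> proper_ideals"
proof -
  have yi: "is_ideal y" using y unfolding proper_ideals_def by auto
  obtain p where p: "is_filter p" "x \<subseteq> p" "p \<inter> y = {}" "\<forall>a b. sup a b \<in> p \<longrightarrow> a \<in> p \<or> b \<in> p"
    using pft[OF D x yi xy] by blast
  have "bot \<notin> p" using ideal_bot[OF yi] p(3) by auto
  then have pu: "p \<noteq> UNIV" by auto
  have "is_ideal (- p)" unfolding is_ideal_def
  proof (intro conjI ballI allI impI)
    show "- p \<noteq> {}" using pu by auto
  next
    fix a b assume "a \<in> - p" "b \<le> a" then show "b \<in> - p" using filter_up[OF p(1)] by blast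
  next
    fix a b assume "a \<in> - p" "b \<in> - p" then show "sup a b \<in> - p" using p(4) by blast
  qed
  moreover have "- p \<noteq> UNIV" using filter_top[OF p(1)] by auto
  ultimately show ?thesis using p pu unfolding proper_filters_def proper_ideals_def by blast
qed

lemma distrib_Galois:
  assumes D: "distributive_on (UNIV::'a::bounded_lattice set) inf sup"
  shows "distributive_on (Galois_sets :: 'a::bounded_lattice set set set) (\<inter>) G_join"
  unfolding distributive_on_def
proof (intro ballI)
  fix A B C :: "'a set set" assume A: "A \<in> Galois_sets" and B: "B \<in> Galois_sets" and C: "C \<in> Galois_sets"
  show "A \<inter> G_join B C = G_join (A \<inter> B) (A \<inter> C)"
  proof
    have 1: "A \<inter> B \<subseteq> A \<inter> G_join B C" using G_join_ub1[OF B C] by blast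
    have 2: "A \<inter> C \<subseteq> A \<inter> G_join B C" using G_join_ub2[OF B C] by blast
    show "G_join (A \<inter> B) (A \<inter> C) \<subseteq> A \<inter> G_join B C"
      by (rule G_join_least[OF 1 2 Galois_inter[OF A G_join_Galois]])
  next
    show "A \<inter> G_join B C \<subseteq> G_join (A \<inter> B) (A \<inter> C)"
    proof
      fix x assume xx: "x \<in> A \<inter> G_join B C"
      have xX: "x \<in> proper_filters" using xx Galois_sub[OF A] by auto
      show "x \<in> G_join (A \<inter> B) (A \<inter> C)" unfolding G_join_def polarY_def
      proof (intro CollectI conjI ballI xX)
        fix y assume y: "y \<in> polarX (A \<inter> B \<union> A \<inter> C)"
        show "meets x y"
        proof (rule ccontr)
          assume "\<not> meets x y"
          then have "x \<inter> y = {}" unfolding meets_def by auto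
          then obtain p where p: "p \<in> proper_filters" "x \<subseteq> p" "p \<inter> y = {}"
            "\<forall>a b. sup a b \<in> p \<longrightarrow> a \<in> p \<or> b \<in> p" "- p \<in> proper_ideals"
            using pft'[OF D pf_filter[OF xX] subsetD[OF polarX_sub y]] by blast
          have pA: "p \<in> A" using Galois_up[OF A _ p(2) p(1)] xx by simp
          have "p \<in> B \<or> p \<in> C"
          proof (rule ccontr)
            assume nbc: "\<not> (p \<in> B \<or> p \<in> C)"
            have "- p \<in> polarX (B \<union> C)" unfolding polarX_def
            proof (intro CollectI conjI ballI p(5))
              fix u assume u: "u \<in> B \<union> C"
              show "meets u (- p)"
              proof (rule ccontr)
                assume "\<not> meets u (- p)"
                then have "u \<subseteq> p" unfolding meets_def by auto
                then show False using u nbc Galois_up[OF B _ _ p(1)] Galois_up[OF C _ _ p(1)] by auto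
              qed
            qed
            then have "meets x (- p)" using xx unfolding G_join_def polarY_def by auto
            then show False using p(2) unfolding meets_def by auto
          qed
          then have "meets p y" using pA y unfolding polarX_def by auto
          then show False using p(3) unfolding meets_def by auto
        qed
      qed
    qed
  qed
qed

lemma compl_Galois:
  fixes nu :: "'a::bounded_lattice \<Rightarrow> 'a"
  assumes D: "distributive_on (UNIV::'a::bounded_lattice set) inf sup" and anti: "antimono nu"
    and cm: "\<forall>a. sup a (nu a) = top" and A: "A \<in> Galois_sets"
  shows "G_join A (star nu A) = proper_filters"
proof
  show "G_join A (star nu A) \<subseteq> proper_filters"
    using G_join_least[OF Galois_sub[OF A] Galois_sub[OF star_Galois] Galois_top] .
next
  show "proper_filters \<subseteq> G_join A (star nu A)"
  proof
    fix x :: "'a set" assume xX: "x \<in> proper_filters"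
    show "x \<in> G_join A (star nu A)" unfolding G_join_def polarY_def
    proof (intro CollectI conjI ballI xX)
      fix y assume y: "y \<in> polarX (A \<union> star nu A)"
      show "meets x y"
      proof (rule ccontr)
        assume "\<not> meets x y"
        then have "x \<inter> y = {}" unfolding meets_def by auto
        then obtain p where p: "p \<in> proper_filters" "x \<subseteq> p" "p \<inter> y = {}"
          "\<forall>a b. sup a b \<in> p \<longrightarrow> a \<in> p \<or> b \<in> p" "- p \<in> proper_ideals"
          using pft'[OF D pf_filter[OF xX] subsetD[OF polarX_sub y]] by blast
        have "p \<in> A \<or> p \<in> star nu A"
        proof (rule disjCI)
          assume "p \<notin> star nu A"
          have notst: "\<not> (\<forall>z\<in>A. \<exists>c\<in>z. nu c \<in> p)"
            using \<open>p \<notin> star nu A\<close> star_iff[OF anti Galois_sub[OF A]] p(1) by blast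
          show "p \<in> A"
          proof (rule ccontr)
            assume "p \<notin> A"
            then have "p \<notin> polarY (polarX A)" using Galois_cl[OF A] by simp
            then obtain y' where y': "y' \<in> polarX A" "\<not> meets p y'" unfolding polarY_def using p(1) by auto
            have "\<forall>z\<in>A. \<exists>c\<in>z. nu c \<in> p"
            proof
              fix z assume "z \<in> A"
              then obtain c where c: "c \<in> z" "c \<in> y'" using y'(1) unfolding polarX_def meets_def by auto
              then have "c \<notin> p" using y'(2) unfolding meets_def by auto
              moreover have "sup c (nu c) \<in> p" using cm filter_top[OF pf_filter[OF p(1)]] by simp
              ultimately show "\<exists>c\<in>z. nu c \<in> p" using p(4) c by blast
            qed
            then show False using notst by blast
          qed
        qed
        then have "meets p y" using y unfolding polarX_def by auto
        then show False using p(3) unfolding meets_def by auto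
      qed
    qed
  qed
qed

lemma ortho_Galois:
  assumes anti: "antimono nu" and om: "\<forall>a. inf a (nu a) = bot" and A: "A \<subseteq> proper_filters"
  shows "A \<inter> star nu A = {}"
proof (rule ccontr)
  assume "A \<inter> star nu A \<noteq> {}"
  then obtain x where x: "x \<in> A" "x \<in> star nu A" by auto
  then obtain c where c: "c \<in> x" "nu c \<in> x" using star_iff[OF anti A] by blast
  have xX: "x \<in> proper_filters" using x A by auto
  have "inf c (nu c) \<in> x" using filter_inf[OF pf_filter[OF xX] c] .
  then show False using om pf_bot[OF xX] by simp
qed

lemma G_Galois:
  assumes anti: "antimono nu" and g: "\<forall>a. a \<le> nu (nu a)" and A: "A \<subseteq> proper_filters"
  shows "A \<subseteq> star nu (star nu A)"
proof
  fix x assume x: "x \<in> A"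
  have xX: "x \<in> proper_filters" using x A by auto
  have stsub: "star nu A \<subseteq> proper_filters" using polarY_sub star_eq by metis
  show "x \<in> star nu (star nu A)"
  proof (subst star_iff[OF anti stsub], intro conjI ballI xX)
    fix w assume "w \<in> star nu A"
    then obtain d where "d \<in> x" "nu d \<in> w" using star_iff[OF anti A] x by blast
    then show "\<exists>c\<in>w. nu c \<in> x" using filter_up[OF pf_filter[OF xX]] g by blast
  qed
qed

lemma INV_Galois:
  assumes M: "M_alg UNIV (\<le>) inf sup bot top nu" and anti: "antimono nu"
    and inv: "\<forall>a. nu (nu a) = a" and A: "A \<in> Galois_sets"
  shows "star nu (star nu A) = A"
proof
  show "A \<subseteq> star nu (star nu A)" using G_Galois[OF anti _ Galois_sub[OF A]] inv by simp
next
  have nj: "\<And>a b. nu (sup a b) = inf (nu a) (nu b)" using M unfolding M_alg_def by auto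
  have stsub: "star nu A \<subseteq> proper_filters" using polarY_sub star_eq by metis
  show "star nu (star nu A) \<subseteq> A"
  proof
    fix x assume xs: "x \<in> star nu (star nu A)"
    then have xX: "x \<in> proper_filters" and xw: "\<forall>w\<in>star nu A. \<exists>c\<in>w. nu c \<in> x"
      using star_iff[OF anti stsub] by auto
    have "x \<in> polarY (polarX A)" unfolding polarY_def
    proof (intro CollectI conjI ballI xX)
      fix y assume y: "y \<in> polarX A"
      have yi: "is_ideal y" and yu: "y \<noteq> UNIV" using y polarX_sub unfolding proper_ideals_def by auto
      define w where "w = {c. nu c \<in> y}"
      have wf: "is_filter w" unfolding is_filter_def
      proof (intro conjI ballI allI impI)
        obtain b where "b \<in> y" using yi unfolding is_ideal_def by auto
        then have "nu b \<in> w" unfolding w_def using inv by simp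
        then show "w \<noteq> {}" by auto
      next
        fix a b assume "a \<in> w" "a \<le> b" then show "b \<in> w" unfolding w_def
          using anti ideal_down[OF yi] unfolding antimono_def by blast
      next
        fix a b assume ab: "a \<in> w" "b \<in> w"
        have "nu (sup (nu a) (nu b)) = inf a b" using nj inv by simp
        then have "nu (inf a b) = sup (nu a) (nu b)" using inv by metis
        then show "inf a b \<in> w" using ab ideal_sup[OF yi] unfolding w_def by simp
      qed
      have wu: "w \<noteq> UNIV"
      proof
        assume "w = UNIV"
        then have "\<forall>a. nu (nu a) \<in> y" unfolding w_def by auto
        then show False using inv yu by auto
      qed
      have "w \<in> star nu A"
      proof (subst star_iff[OF anti Galois_sub[OF A]], intro conjI ballI)
        show "w \<in> proper_filters" using wf wu unfolding proper_filters_def by auto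
      next
        fix z assume "z \<in> A"
        then obtain c where "c \<in> z" "c \<in> y" using y unfolding polarX_def meets_def by auto
        then show "\<exists>c\<in>z. nu c \<in> w" unfolding w_def using inv by auto
      qed
      then obtain c where "c \<in> w" "nu c \<in> x" using xw by blast
      then show "meets x y" unfolding meets_def w_def by auto
    qed
    then show "x \<in> A" using Galois_cl[OF A] by simp
  qed
qed



lemma M_Galois:
  fixes nu :: "'a::bounded_lattice \<Rightarrow> 'a"
  assumes M: "M_alg UNIV (\<le>) inf sup bot top nu" and anti: "antimono nu"
  shows "M_alg (Galois_sets :: 'a set set set) (\<subseteq>) (\<inter>) G_join {} proper_filters (star nu)"
  unfolding M_alg_def
proof (intro conjI ballI impI)
  show "bounded_lattice_on (Galois_sets :: 'a set set set) (\<subseteq>) (\<inter>) G_join {} proper_filters" by (rule BL)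
  show "star nu {} = proper_filters" by (rule star_empty)
next
  fix a :: "'a set set" show "star nu a \<in> Galois_sets" by (rule star_Galois)
next
  fix a b :: "'a set set" assume "a \<subseteq> b" then show "star nu b \<subseteq> star nu a" by (rule star_anti)
next
  fix a b :: "'a set set" assume a: "a \<in> Galois_sets" and b: "b \<in> Galois_sets"
  show "star nu (G_join a b) = star nu a \<inter> star nu b"
    by (rule star_join[OF M anti Galois_sub[OF a] Galois_sub[OF b]])
qed

theorem theorem5p4:
  fixes nu :: "'a::bounded_lattice \<Rightarrow> 'a" and V :: variety
  assumes "antimono nu"
    and "in_variety V UNIV (\<le>) inf sup bot top nu"
  shows "in_variety V (Galois_sets :: 'a set set set) (\<subseteq>) (\<inter>) G_join {} proper_filters (star nu)"
proof -
  have M: "M_alg UNIV (\<le>) inf sup bot top nu" using assms(2) unfolding in_variety_def by blast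
  have MG: "M_alg (Galois_sets :: 'a set set set) (\<subseteq>) (\<inter>) G_join {} proper_filters (star nu)"
    by (rule M_Galois[OF M assms(1)])
  have L: "case V of
        VM \<Rightarrow> True
      | VG \<Rightarrow> (\<forall>a\<in>UNIV. a \<le> nu (nu a))
      | VINV \<Rightarrow> (\<forall>a\<in>UNIV. nu (nu a) = a)
      | VDMA \<Rightarrow> (\<forall>a\<in>UNIV. nu (nu a) = a) \<and> distributive_on (UNIV::'a set) inf sup
      | VO \<Rightarrow> (\<forall>a\<in>UNIV. nu (nu a) = a) \<and> (\<forall>a\<in>UNIV. inf a (nu a) = bot)
      | VBA \<Rightarrow> distributive_on (UNIV::'a set) inf sup \<and>
               (\<forall>a\<in>UNIV. inf a (nu a) = bot \<and> sup a (nu a) = top)"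
    using assms(2) unfolding in_variety_def by blast
  have "case V of
        VM \<Rightarrow> True
      | VG \<Rightarrow> (\<forall>a\<in>(Galois_sets :: 'a set set set). a \<subseteq> star nu (star nu a))
      | VINV \<Rightarrow> (\<forall>a\<in>(Galois_sets :: 'a set set set). star nu (star nu a) = a)
      | VDMA \<Rightarrow> (\<forall>a\<in>(Galois_sets :: 'a set set set). star nu (star nu a) = a) \<and> distributive_on (Galois_sets :: 'a set set set) (\<inter>) G_join
      | VO \<Rightarrow> (\<forall>a\<in>(Galois_sets :: 'a set set set). star nu (star nu a) = a) \<and> (\<forall>a\<in>(Galois_sets :: 'a set set set). a \<inter> star nu a = {})
      | VBA \<Rightarrow> distributive_on (Galois_sets :: 'a set set set) (\<inter>) G_join \<and>
               (\<forall>a\<in>(Galois_sets :: 'a set set set). a \<inter> star nu a = {} \<and> G_join a (star nu a) = proper_filters)"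
  proof (cases V)
    case VM then show ?thesis by simp
  next
    case VG
    then have g: "\<forall>a. a \<le> nu (nu a)" using L by simp
    show ?thesis using VG G_Galois[OF assms(1) g Galois_sub] by simp
  next
    case VINV
    then have i: "\<forall>a. nu (nu a) = a" using L by simp
    show ?thesis using VINV INV_Galois[OF M assms(1) i] by simp
  next
    case VDMA
    then have i: "\<forall>a. nu (nu a) = a" and d: "distributive_on (UNIV::'a set) inf sup" using L by simp_all
    show ?thesis using VDMA INV_Galois[OF M assms(1) i] distrib_Galois[OF d] by simp
  next
    case VO
    then have i: "\<forall>a. nu (nu a) = a" and o: "\<forall>a. inf a (nu a) = bot" using L by simp_all
    show ?thesis using VO INV_Galois[OF M assms(1) i] ortho_Galois[OF assms(1) o Galois_sub] by simp
  next
    case VBA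
    then have d: "distributive_on (UNIV::'a set) inf sup" and o: "\<forall>a. inf a (nu a) = bot"
      and c: "\<forall>a. sup a (nu a) = top" using L by simp_all
    show ?thesis using VBA distrib_Galois[OF d] ortho_Galois[OF assms(1) o Galois_sub]
      compl_Galois[OF d assms(1) c] by simp
  qed
  then show ?thesis using MG unfolding in_variety_def by blast
qed


end
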